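(* Suppose $p>1-1/e^2$ and fix $\epsilon'>0$. Then there is a constant $c_1=c_1(\epsilon')>0$ (independent of $n$) such that for every $n$ with $x_0(n)>\epsilon'$ we have $\varphi_n(x_0(n)-\epsilon')\ge c_1$.
   Context: Let $p\in(0,1)$ be constant, $q=1-p$, $b=1/q$, $\gamma=\gamma(n)=2\log_b n-2\log_b\log_b n-2\log_b 2$, $\Delta=\gamma-\lfloor\gamma\rfloor\in[0,1)$. Define $\varphi_n(x)=(1-\Delta+x)\log_b(1-\Delta+x)+(1-\Delta)(\Delta-x)/2$, and let $x_0=x_0(n)$ be the smallest nonnegative $x$ with $\varphi_n(x)\le0$ (well defined since $\varphi_n(\Delta)=0$, and $x_0\in[0,\Delta]$). *)

theory Defs
  imports Complex_Main
begin

definition base :: "real \<Rightarrow> real" where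
  "base p = 1 / (1 - p)"

definition gamma :: "real \<Rightarrow> nat \<Rightarrow> real" where
  "gamma p n = 2 * log (base p) (real n) - 2 * log (base p) (log (base p) (real n))
               - 2 * log (base p) 2"

definition Delta :: "real \<Rightarrow> nat \<Rightarrow> real" where
  "Delta p n = gamma p n - real_of_int \<lfloor>gamma p n\<rfloor>"

definition phi :: "real \<Rightarrow> nat \<Rightarrow> real \<Rightarrow> real" where
  "phi p n x = (1 - Delta p n + x) * log (base p) (1 - Delta p n + x)
               + (1 - Delta p n) * (Delta p n - x) / 2"

definition x0 :: "real \<Rightarrow> nat \<Rightarrow> real" where
  "x0 p n = (LEAST x. 0 \<le> x \<and> phi p n x \<le> 0)"

end

theory Submission imports Defs "HOL-Analysis.Analysis" begin
lemma aux_ln: fixes y::real assumes "0<y" "y\<le>1" shows "(1-y)^2/2 \<le> y*ln y + 1 - y"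
proof -
  define g where "g = (\<lambda>y::real. y*ln y + 1 - y - (1-y)^2/2)"
  have "g 1 \<le> g y"
  proof (rule DERIV_nonpos_imp_decreasing_open[OF assms(2)])
    fix x assume x: "y < x" "x < 1"
    hence xp: "x>0" using assms by auto
    show "\<exists>d. DERIV g x :> d \<and> d \<le> 0"
      apply (rule exI[of _ "ln x + 1 - x"])
      unfolding g_def using ln_le_minus_one[OF xp] xp
      by (auto intro!: derivative_eq_intros simp: field_simps power2_eq_square)
  next
    show "continuous_on {y..1} g" unfolding g_def
      by (intro continuous_intros) (use assms in auto)
  qed
  thus ?thesis by (simp add: g_def)
qed
lemma key:
  fixes a L r t :: real and f :: "real \<Rightarrow> real"
  assumes L: "0 < L" and a: "0 < a" "a \<le> t" and tr: "t < r" and r1: "r \<le> 1"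
    and f_def: "\<And>u. f u = u * ln u / L + a*(1-u)/2"
    and pos: "\<And>s. a \<le> s \<Longrightarrow> s < r \<Longrightarrow> f s > 0" and fr: "f r = 0"
  shows "f t \<ge> (r-t)^2/(2*L)"
proof -
  have rp: "r > 0" using a tr by linarith
  have tp: "t > 0" using a by linarith
  have step1: "(1 + ln r)/L \<le> a/2"
  proof (rule ccontr)
    assume "\<not> ?thesis"
    define g where "g = (1 + ln r)/L - a/2"
    have g: "g > 0" using \<open>\<not> _\<close> by (simp add: g_def)
    define s where "s = max a (r*(1 - g*L/2))"
    have gL: "g*L > 0" using g L by simp
    have s1: "a \<le> s" by (simp add: s_def)
    have s2: "s < r" unfolding s_def proof -
      have "r*(g*L) > 0" using rp gL by simp
      thus "max a (r * (1 - g * L / 2)) < r" using a tr by (auto simp: algebra_simps)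
    qed
    have sp: "s > 0" using s1 a by linarith
    have s3: "s/r \<ge> 1 - g*L/2" unfolding s_def using rp
      by (simp add: le_divide_eq algebra_simps)
    have c: "(s/r + ln r)/L - a/2 \<ge> g/2"
    proof -
      have "(s/r + ln r)/L \<ge> (1 - g*L/2 + ln r)/L" using s3 L by (simp add: divide_right_mono)
      also have "(1 - g*L/2 + ln r)/L = (1+ln r)/L - g/2" using L by (simp add: field_simps)
      finally have h: "(1 + ln r) / L - g / 2 \<le> (s / r + ln r) / L" .
      have "g/2 = (1 + ln r) / L - g / 2 - a/2" using L unfolding g_def by (simp add: field_simps)
      with h show ?thesis by linarith
    qed
    have lnb: "ln (s/r) \<le> s/r - 1" using ln_le_minus_one sp rp by simp
    have "s * ln s - r * ln r \<le> (s - r)*(s/r + ln r)"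
    proof -
      have "s * ln s = s * ln (s/r) + s * ln r" using sp rp by (simp add: ln_div algebra_simps)
      also have "\<dots> \<le> s*(s/r - 1) + s*ln r" using lnb sp by (simp add: mult_left_mono)
      also have "s*(s/r - 1) = (s - r)*(s/r)" using rp by (simp add: field_simps)
      finally show ?thesis by (simp add: algebra_simps)
    qed
    hence h1: "(s * ln s - r * ln r)/L \<le> (s - r)*(s/r + ln r)/L" using L by (simp add: divide_right_mono)
    have h2: "f s - f r = (s*ln s - r*ln r)/L + a*(r-s)/2" by (simp add: f_def algebra_simps diff_divide_distrib)
    have h3: "(s - r)*((s/r + ln r)/L - a/2) = (s - r)*(s/r + ln r)/L + a*(r-s)/2"
      by (simp add: algebra_simps add_divide_distrib[symmetric])
    have "f s - f r \<le> (s - r)*((s/r + ln r)/L - a/2)" using h1 h2 h3 by linarith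
    also have "\<dots> < 0" using s2 c g by (intro mult_neg_pos) auto
    finally have "f s < 0" using fr by simp
    with pos[OF s1 s2] show False by simp
  qed
  have "f t - f r = (t*ln t - r*ln r)/L + a*(r-t)/2" by (simp add: f_def algebra_simps diff_divide_distrib)
  also have "\<dots> \<ge> (t*ln t - r*ln r)/L + (r-t)*((1 + ln r)/L)"
  proof -
    have "(r-t)*((1 + ln r)/L) \<le> (r-t)*(a/2)" using step1 tr by (intro mult_left_mono) auto
    thus ?thesis by (simp add: algebra_simps)
  qed
  finally have A: "f t \<ge> (t*ln t - r*ln r + (r-t)*(1 + ln r))/L" using fr L by (simp add: field_simps)
  define y where "y = t/r"
  have y: "0 < y" "y \<le> 1" using tp rp tr by (auto simp: y_def)
  have "t*ln t - r*ln r + (r-t)*(1 + ln r) = r*(y*ln y + 1 - y)"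
    using tp rp by (simp add: y_def ln_div field_simps)
  also have "\<dots> \<ge> r*((1-y)^2/2)" using aux_ln[OF y] rp by (simp add: mult_left_mono)
  also have "r*((1-y)^2/2) = (r-t)^2/(2*r)" using rp by (simp add: y_def field_simps power2_eq_square)
  also have "\<dots> \<ge> (r-t)^2/2" using rp r1 by (simp add: le_divide_eq mult_left_le)
  finally have "(r-t)^2/2 \<le> t*ln t - r*ln r + (r-t)*(1 + ln r)" .
  hence "(r-t)^2/2/L \<le> (t*ln t - r*ln r + (r-t)*(1 + ln r))/L" by (rule divide_right_mono) (use L in simp)
  with A show ?thesis by simp
    
qed
theorem lemma5:
  fixes p \<epsilon>' :: real
  assumes "0 < p" "p < 1" "p > 1 - 1 / exp 2" "\<epsilon>' > 0"
  shows "\<exists>c1 > 0. \<forall>n::nat. x0 p n > \<epsilon>' \<longrightarrow> phi p n (x0 p n - \<epsilon>') \<ge> c1"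
proof -
  define L where "L = ln (base p)"
  have b1: "base p > 1" using assms(1,2) by (simp add: base_def)
  have L: "L > 0" using b1 by (simp add: L_def)
  show ?thesis
  proof (intro exI[of _ "\<epsilon>'^2/(2*L)"] conjI allI impI)
    show "\<epsilon>'^2/(2*L) > 0" using L assms(4) by simp
  next
    fix n :: nat
    assume xe: "x0 p n > \<epsilon>'"
    define D where "D = Delta p n"
    have D: "0 \<le> D" "D < 1" unfolding D_def Delta_def by linarith+
    define a where "a = 1 - D"
    have a: "0 < a" "a \<le> 1" using D by (auto simp: a_def)
    define f where "f = (\<lambda>u::real. u * ln u / L + a*(1-u)/2)"
    have phif: "phi p n x = f (a + x)" for x
      unfolding phi_def f_def a_def D_def[symmetric] log_def L_def by (simp add: algebra_simps)
    define S where "S = {x. 0 \<le> x \<and> phi p n x \<le> 0}"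
    have DS: "D \<in> S" using D by (simp add: S_def phif f_def a_def)
    have cont: "continuous_on {0..} (phi p n)"
      unfolding phif f_def using a L by (intro continuous_intros) auto
    have clS: "closed S"
    proof -
      have "closed ({0..} \<inter> phi p n -` {..0})"
        by (rule continuous_closed_preimage[OF cont]) auto
      moreover have "S = {0..} \<inter> phi p n -` {..0}" by (auto simp: S_def)
      ultimately show ?thesis by simp
    qed
    have bdd: "bdd_below S" unfolding S_def by (rule bdd_belowI[of _ 0]) auto
    have mS: "Inf S \<in> S" using closed_contains_Inf[OF _ bdd clS] DS by auto
    have mle: "Inf S \<le> y" if "y \<in> S" for y using cInf_lower[OF that bdd] .
    have x0eq: "x0 p n = Inf S" unfolding x0_def
      by (rule Least_equality) (use mS mle in \<open>auto simp: S_def\<close>)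
    define r where "r = a + x0 p n"
    define t where "t = a + (x0 p n - \<epsilon>')"
    have x0D: "x0 p n \<le> D" using mle[OF DS] x0eq by simp
    have posx: "phi p n x > 0" if "0 \<le> x" "x < x0 p n" for x
    proof (rule ccontr)
      assume "\<not> ?thesis"
      hence "x \<in> S" using that by (auto simp: S_def)
      with mle x0eq that show False by fastforce
    qed
    have phx0le: "phi p n (x0 p n) \<le> 0" using mS x0eq by (simp add: S_def)
    have x0pos: "x0 p n > 0" using xe assms(4) by linarith
    have phx0ge: "phi p n (x0 p n) \<ge> 0"
    proof (rule tendsto_lowerbound)
      have "isCont (phi p n) (x0 p n)"
        using continuous_on_interior[OF cont] x0pos by simp
      thus "(phi p n \<longlongrightarrow> phi p n (x0 p n)) (at_left (x0 p n))"
        by (simp add: isCont_def filterlim_at_split)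
      show "\<forall>\<^sub>F x in at_left (x0 p n). 0 \<le> phi p n x"
        using eventually_at_left_real[OF x0pos] by eventually_elim (auto intro: less_imp_le posx)
      show "at_left (x0 p n) \<noteq> bot" by simp
    qed
    have "f t \<ge> (r-t)^2/(2*L)"
    proof (rule key[OF L a(1)])
      show "\<And>u. f u = u * ln u / L + a * (1 - u) / 2" by (simp add: f_def)
      show "a \<le> t" using xe by (simp add: t_def)
      show "t < r" using assms(4) by (simp add: t_def r_def)
      show "r \<le> 1" using x0D by (simp add: r_def a_def)
      show "f s > 0" if "a \<le> s" "s < r" for s
        using posx[of "s - a"] that by (simp add: phif r_def)
      show "f r = 0" using phx0le phx0ge by (simp add: phif r_def)
    qed
    moreover have "r - t = \<epsilon>'" by (simp add: r_def t_def)
    ultimately have "f t \<ge> \<epsilon>'^2/(2*L)" by simp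
    thus "phi p n (x0 p n - \<epsilon>') \<ge> \<epsilon>'^2/(2*L)" by (simp add: phif t_def)
  qed
qed
end
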